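(* Let $(X,\mathcal{B},\mu)$ be a standard probability space and $r\geq2$ an integer. A subset $K$ of $\mathfrak{P}_r$ is precompact in $(\mathfrak{P}_r,\widetilde\rho)$ if and only if the set $\{\mathbf{1}_A\colon A\in\alpha\in K\}$ is precompact in $L^2(\mu)$.
   Context: $\mathfrak{P}_r$ is the set of finite measurable partitions of $X$ with at most $r$ atoms (identified mod $0$). For $\alpha,\beta\in\mathfrak{P}_r$ write $\alpha=\{A_1,\dots,A_r\}$, $\beta=\{B_1,\dots,B_r\}$ (adding empty sets if necessary) and $\widetilde\rho(\alpha,\beta)=\min_{\sigma\in S_r}\sum_{i=1}^r\mu(A_i\triangle B_{\sigma(i)})$, $S_r$ the permutation group of $\{1,\dots,r\}$. *)

theory Defs
  imports "HOL-Probability.Probability" "HOL-Combinatorics.Permutations"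
begin

definition standard_borel_space :: "'a measure \<Rightarrow> bool" where
  "standard_borel_space M \<longleftrightarrow>
     (\<exists>X. completely_metrizable_space X \<and> separable_space X \<and>
          topspace X = space M \<and> sets M = sigma_sets (space M) {U. openin X U})"

definition standard_probability_space :: "'a measure \<Rightarrow> bool" where
  "standard_probability_space M \<longleftrightarrow> prob_space M \<and> standard_borel_space M"

text \<open>Finite measurable partitions of the space with at most r atoms (representatives;
  the identification mod 0 is irrelevant for precompactness).\<close>
definition meas_partitions :: "'a measure \<Rightarrow> nat \<Rightarrow> 'a set set set" where
  "meas_partitions M r = {\<alpha>. finite \<alpha> \<and> card \<alpha> \<le> r \<and> \<alpha> \<subseteq> sets M \<and>
      disjoint \<alpha> \<and> \<Union>\<alpha> = space M}"

definition padded_listing :: "nat \<Rightarrow> 'a set set \<Rightarrow> 'a set list \<Rightarrow> bool" where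
  "padded_listing r \<alpha> as \<longleftrightarrow> length as = r \<and> set as \<subseteq> \<alpha> \<union> {{}} \<and>
      (\<forall>A\<in>\<alpha> - {{}}. count_list as A = 1)"

definition part_list :: "nat \<Rightarrow> 'a set set \<Rightarrow> 'a set list" where
  "part_list r \<alpha> = (SOME as. padded_listing r \<alpha> as)"

definition rho_tilde :: "'a measure \<Rightarrow> nat \<Rightarrow> 'a set set \<Rightarrow> 'a set set \<Rightarrow> real" where
  "rho_tilde M r \<alpha> \<beta> =
     Min {(\<Sum>i<r. measure M ((part_list r \<alpha> ! i - part_list r \<beta> ! \<sigma> i)
                              \<union> (part_list r \<beta> ! \<sigma> i - part_list r \<alpha> ! i))) | \<sigma>.
           \<sigma> permutes {..<r}}"

definition L2_dist :: "'a measure \<Rightarrow> ('a \<Rightarrow> real) \<Rightarrow> ('a \<Rightarrow> real) \<Rightarrow> real" where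
  "L2_dist M f g = sqrt (\<integral>x. (f x - g x)\<^sup>2 \<partial>M)"

text \<open>Precompact = totally bounded with respect to a (pseudo)metric d.\<close>
definition precompact_wrt :: "('b \<Rightarrow> 'b \<Rightarrow> real) \<Rightarrow> 'b set \<Rightarrow> bool" where
  "precompact_wrt d S \<longleftrightarrow>
     (\<forall>e>0. \<exists>F. finite F \<and> F \<subseteq> S \<and> (\<forall>x\<in>S. \<exists>y\<in>F. d x y < e))"

end

theory Submission
  imports Defs
begin

definition symd :: "'a measure \<Rightarrow> 'a set \<Rightarrow> 'a set \<Rightarrow> real" where
  "symd M A B = measure M ((A - B) \<union> (B - A))"

lemma symd_nonneg: "symd M A B \<ge> 0"
  unfolding symd_def by simp

lemma symd_sym: "symd M A B = symd M B A"
  unfolding symd_def by (simp add: Un_commute)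

lemma symd_triangle:
  assumes "finite_measure M" "A \<in> sets M" "B \<in> sets M" "C \<in> sets M"
  shows "symd M A C \<le> symd M A B + symd M B C"
proof -
  interpret finite_measure M by fact
  have "measure M ((A - C) \<union> (C - A)) \<le> measure M (((A - B) \<union> (B - A)) \<union> ((B - C) \<union> (C - B)))"
    using assms by (intro finite_measure_mono) auto
  also have "\<dots> \<le> measure M ((A - B) \<union> (B - A)) + measure M ((B - C) \<union> (C - B))"
    using assms by (intro measure_Un_le) auto
  finally show ?thesis unfolding symd_def .
qed

lemma count_list_distinct: "distinct xs \<Longrightarrow> x \<in> set xs \<Longrightarrow> count_list xs x = 1"
  by (induction xs) auto

lemma padded_ex:
  assumes "finite \<alpha>" "card \<alpha> \<le> r"
  shows "padded_listing r \<alpha> (part_list r \<alpha>)"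
proof -
  obtain xs where xs: "set xs = \<alpha> - {{}}" "distinct xs"
    using finite_distinct_list[of "\<alpha> - {{}}"] assms by auto
  have "length xs = card (\<alpha> - {{}})" by (metis distinct_card xs)
  moreover have "card (\<alpha> - {{}}) \<le> card \<alpha>" using assms by (intro card_mono) auto
  ultimately have len: "length xs \<le> r" using assms by linarith
  let ?as = "xs @ replicate (r - length xs) {}"
  have "padded_listing r \<alpha> ?as"
    unfolding padded_listing_def using len xs count_list_distinct[OF xs(2)]
    by (auto simp: count_list_0_iff)
  then show ?thesis unfolding part_list_def by (rule someI)
qed

lemma gen_cover:
  assumes fm: "finite_measure M" and S: "S \<subseteq> sets M"
    and cov: "\<And>e. e > 0 \<Longrightarrow> \<exists>G. finite G \<and> G \<subseteq> sets M \<and> (\<forall>x\<in>S. \<exists>y\<in>G. symd M x y < e)"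
  shows "precompact_wrt (symd M) S"
  unfolding precompact_wrt_def
proof (intro allI impI)
  fix e :: real assume e: "e > 0"
  obtain G where G: "finite G" "G \<subseteq> sets M" "\<forall>x\<in>S. \<exists>y\<in>G. symd M x y < e/2"
    using cov[of "e/2"] e by auto
  define pick where "pick g = (SOME x. x \<in> S \<and> symd M x g < e/2)" for g
  define G' where "G' = {g\<in>G. \<exists>x\<in>S. symd M x g < e/2}"
  have pk: "pick g \<in> S \<and> symd M (pick g) g < e/2" if "g \<in> G'" for g
    using that unfolding G'_def pick_def by (metis (mono_tags, lifting) mem_Collect_eq someI_ex)
  show "\<exists>F. finite F \<and> F \<subseteq> S \<and> (\<forall>x\<in>S. \<exists>y\<in>F. symd M x y < e)"
  proof (intro exI conjI ballI)
    show "finite (pick ` G')" using G(1) unfolding G'_def by auto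
    show "pick ` G' \<subseteq> S" using pk by auto
    fix x assume x: "x \<in> S"
    then obtain g where g: "g \<in> G" "symd M x g < e/2" using G(3) by auto
    then have gG: "g \<in> G'" unfolding G'_def using x by auto
    have "symd M x (pick g) \<le> symd M x g + symd M g (pick g)"
      using symd_triangle[OF fm, of x g "pick g"] x S G(2) g(1) pk[OF gG] by auto
    also have "\<dots> < e" using g(2) pk[OF gG] symd_sym[of M g "pick g"] by auto
    finally show "\<exists>y\<in>pick ` G'. symd M x y < e" using gG by auto
  qed
qed

lemma precompact_image:
  "precompact_wrt d (f ` S) \<longleftrightarrow> precompact_wrt (\<lambda>x y. d (f x) (f y)) S"
  unfolding precompact_wrt_def
proof (intro iffI allI impI)
  fix e :: real assume H: "\<forall>e>0. \<exists>F. finite F \<and> F \<subseteq> f ` S \<and> (\<forall>x\<in>f ` S. \<exists>y\<in>F. d x y < e)" and e: "e > 0"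
  from H[rule_format, OF e] obtain F where F: "finite F" "F \<subseteq> f ` S" "\<forall>x\<in>f ` S. \<exists>y\<in>F. d x y < e" by blast
  obtain F0 where F0: "F0 \<subseteq> S" "finite F0" "F = f ` F0"
    using finite_subset_image[OF F(1) F(2)] by blast
  show "\<exists>F. finite F \<and> F \<subseteq> S \<and> (\<forall>x\<in>S. \<exists>y\<in>F. d (f x) (f y) < e)"
    using F F0 by (intro exI[of _ F0]) auto
next
  fix e :: real assume H: "\<forall>e>0. \<exists>F. finite F \<and> F \<subseteq> S \<and> (\<forall>x\<in>S. \<exists>y\<in>F. d (f x) (f y) < e)" and e: "e > 0"
  from H[rule_format, OF e] obtain F where F: "finite F" "F \<subseteq> S" "\<forall>x\<in>S. \<exists>y\<in>F. d (f x) (f y) < e" by blast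
  show "\<exists>F. finite F \<and> F \<subseteq> f ` S \<and> (\<forall>x\<in>f ` S. \<exists>y\<in>F. d x y < e)"
    using F by (intro exI[of _ "f ` F"]) auto
qed

lemma precompact_cong1:
  assumes "\<And>x y. x \<in> S \<Longrightarrow> y \<in> S \<Longrightarrow> d x y = d' x y" and "precompact_wrt d S"
  shows "precompact_wrt d' S"
  unfolding precompact_wrt_def
proof (intro allI impI)
  fix e :: real assume e: "e > 0"
  from assms(2)[unfolded precompact_wrt_def, rule_format, OF e] obtain F where
    F: "finite F" "F \<subseteq> S" "\<forall>x\<in>S. \<exists>y\<in>F. d x y < e" by blast
  have "\<forall>x\<in>S. \<exists>y\<in>F. d' x y < e"
  proof
    fix x assume x: "x \<in> S"
    obtain y where y: "y \<in> F" "d x y < e" using F(3) x by blast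
    have "d' x y < e" using assms(1)[of x y] x y F(2) by auto
    with y(1) show "\<exists>y\<in>F. d' x y < e" by blast
  qed
  with F show "\<exists>F. finite F \<and> F \<subseteq> S \<and> (\<forall>x\<in>S. \<exists>y\<in>F. d' x y < e)" by blast
qed

lemma precompact_cong:
  assumes "\<And>x y. x \<in> S \<Longrightarrow> y \<in> S \<Longrightarrow> d x y = d' x y"
  shows "precompact_wrt d S \<longleftrightarrow> precompact_wrt d' S"
proof
  assume "precompact_wrt d S" then show "precompact_wrt d' S" using precompact_cong1[of S d d'] assms by blast
next
  assume "precompact_wrt d' S" then show "precompact_wrt d S" using precompact_cong1[of S d' d] assms by metis
qed

lemma precompact_sqrt:
  assumes "\<And>x y. d x y \<ge> 0"
  shows "precompact_wrt (\<lambda>x y. sqrt (d x y)) S \<longleftrightarrow> precompact_wrt d S"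
  unfolding precompact_wrt_def
proof (intro iffI allI impI)
  fix e :: real assume H: "\<forall>e>0. \<exists>F. finite F \<and> F \<subseteq> S \<and> (\<forall>x\<in>S. \<exists>y\<in>F. sqrt (d x y) < e)" and e: "e > 0"
  have "sqrt e > 0" using e by simp
  from H[rule_format, OF this] obtain F where F: "finite F" "F \<subseteq> S" "\<forall>x\<in>S. \<exists>y\<in>F. sqrt (d x y) < sqrt e" by blast
  have "\<forall>x\<in>S. \<exists>y\<in>F. d x y < e"
  proof
    fix x assume x: "x \<in> S"
    obtain y where y: "y \<in> F" "sqrt (d x y) < sqrt e" using F(3) x by blast
    have "d x y < e" using y(2) by (simp only: real_sqrt_less_iff)
    with y(1) show "\<exists>y\<in>F. d x y < e" by blast
  qed
  with F show "\<exists>F. finite F \<and> F \<subseteq> S \<and> (\<forall>x\<in>S. \<exists>y\<in>F. d x y < e)" by blast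
next
  fix e :: real assume H: "\<forall>e>0. \<exists>F. finite F \<and> F \<subseteq> S \<and> (\<forall>x\<in>S. \<exists>y\<in>F. d x y < e)" and e: "e > 0"
  have "e\<^sup>2 > 0" using e by simp
  from H[rule_format, OF this] obtain F where F: "finite F" "F \<subseteq> S" "\<forall>x\<in>S. \<exists>y\<in>F. d x y < e\<^sup>2" by blast
  have se: "sqrt (e\<^sup>2) = e" using e by simp
  have "\<forall>x\<in>S. \<exists>y\<in>F. sqrt (d x y) < e"
  proof
    fix x assume x: "x \<in> S"
    obtain y where y: "y \<in> F" "d x y < e\<^sup>2" using F(3) x by blast
    have "sqrt (d x y) < sqrt (e\<^sup>2)" using y(2) by (simp only: real_sqrt_less_iff)
    then have "sqrt (d x y) < e" using se by simp
    with y(1) show "\<exists>y\<in>F. sqrt (d x y) < e" by blast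
  qed
  with F show "\<exists>F. finite F \<and> F \<subseteq> S \<and> (\<forall>x\<in>S. \<exists>y\<in>F. sqrt (d x y) < e)" by blast
qed

lemma L2_ind:
  assumes "A \<in> sets M" "B \<in> sets M"
  shows "L2_dist M (indicator A) (indicator B) = sqrt (symd M A B)"
proof -
  have eq: "(\<lambda>x. (indicator A x - indicator B x :: real)\<^sup>2) = indicator ((A - B) \<union> (B - A))"
    by (auto simp: indicator_def)
  have "(A - B) \<union> (B - A) \<subseteq> space M" using assms sets.sets_into_space by blast
  then have i: "((A - B) \<union> (B - A)) \<inter> space M = (A - B) \<union> (B - A)" by blast
  have "integral\<^sup>L M (indicator ((A - B) \<union> (B - A)) :: 'a \<Rightarrow> real) = measure M ((A - B) \<union> (B - A))"
    by (subst Bochner_Integration.integral_indicator) (simp only: i)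
  then show ?thesis unfolding L2_dist_def symd_def eq by simp
qed

theorem proposition3p2:
  fixes M :: "'a measure" and r :: nat and K :: "'a set set set"
  assumes "standard_probability_space M"
    and "r \<ge> 2"
    and "K \<subseteq> meas_partitions M r"
  shows "precompact_wrt (rho_tilde M r) K \<longleftrightarrow>
         precompact_wrt (L2_dist M) {(indicator A :: 'a \<Rightarrow> real) | A \<alpha>. \<alpha> \<in> K \<and> A \<in> \<alpha>}"
proof -
  interpret prob_space M using assms(1) unfolding standard_probability_space_def by auto
  have fm: "finite_measure M" by unfold_locales
  have Kp: "finite \<alpha> \<and> card \<alpha> \<le> r \<and> \<alpha> \<subseteq> sets M" if "\<alpha> \<in> K" for \<alpha>
    using assms(3) that unfolding meas_partitions_def by auto
  define pl :: "'a set set \<Rightarrow> 'a set list" where "pl = part_list r"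
  have PL: "padded_listing r \<alpha> (pl \<alpha>)" if "\<alpha> \<in> K" for \<alpha>
    using padded_ex Kp[OF that] unfolding pl_def by auto
  have pl_len: "length (pl \<alpha>) = r" if "\<alpha> \<in> K" for \<alpha>
    using PL[OF that] unfolding padded_listing_def by auto
  have pl_sets: "pl \<alpha> ! i \<in> sets M" if "\<alpha> \<in> K" "i < r" for \<alpha> i
  proof -
    have "pl \<alpha> ! i \<in> set (pl \<alpha>)" using pl_len[OF that(1)] that(2) by auto
    then show ?thesis using PL[OF that(1)] Kp[OF that(1)] unfolding padded_listing_def by auto
  qed
  have pl_in: "\<exists>i<r. pl \<alpha> ! i = A" if "\<alpha> \<in> K" "A \<in> \<alpha>" "A \<noteq> {}" for \<alpha> A
  proof -
    have "count_list (pl \<alpha>) A = 1" using PL[OF that(1)] that unfolding padded_listing_def by auto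
    then have "A \<in> set (pl \<alpha>)" by (metis count_list_0_iff zero_neq_one)
    then show ?thesis using pl_len[OF that(1)] by (auto simp: in_set_conv_nth)
  qed
  have pl_memb: "pl \<alpha> ! i = {} \<or> pl \<alpha> ! i \<in> \<alpha>" if "\<alpha> \<in> K" "i < r" for \<alpha> i
  proof -
    have "pl \<alpha> ! i \<in> set (pl \<alpha>)" using pl_len[OF that(1)] that(2) by auto
    then show ?thesis using PL[OF that(1)] unfolding padded_listing_def by auto
  qed
  define cost where "cost \<alpha> \<beta> \<sigma> = (\<Sum>i<r. symd M (pl \<alpha> ! i) (pl \<beta> ! \<sigma> i))" for \<alpha> \<beta> \<sigma>
  have rho_eq: "rho_tilde M r \<alpha> \<beta> = Min ((cost \<alpha> \<beta>) ` {\<sigma>. \<sigma> permutes {..<r}})" for \<alpha> \<beta>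
    unfolding rho_tilde_def cost_def symd_def pl_def by (intro arg_cong[where f=Min]) blast
  have fin: "finite ((cost \<alpha> \<beta>) ` {\<sigma>. \<sigma> permutes {..<r}})" for \<alpha> \<beta>
    by (simp add: finite_permutations)
  have R1: "rho_tilde M r \<alpha> \<beta> \<le> (\<Sum>i<r. symd M (pl \<alpha> ! i) (pl \<beta> ! i))" for \<alpha> \<beta>
  proof -
    have "cost \<alpha> \<beta> id \<in> (cost \<alpha> \<beta>) ` {\<sigma>. \<sigma> permutes {..<r}}" by (auto intro: permutes_id)
    then show ?thesis unfolding rho_eq using fin[of \<alpha> \<beta>] by (simp add: cost_def)
  qed
  have R2: "\<exists>\<sigma>. \<sigma> permutes {..<r} \<and> cost \<alpha> \<beta> \<sigma> = rho_tilde M r \<alpha> \<beta>" for \<alpha> \<beta>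
  proof -
    have "(cost \<alpha> \<beta>) ` {\<sigma>. \<sigma> permutes {..<r}} \<noteq> {}" using permutes_id by blast
    then have "rho_tilde M r \<alpha> \<beta> \<in> (cost \<alpha> \<beta>) ` {\<sigma>. \<sigma> permutes {..<r}}"
      unfolding rho_eq using fin[of \<alpha> \<beta>] Min_in by blast
    then show ?thesis by auto
  qed
  define S where "S = {A | A \<alpha>. \<alpha> \<in> K \<and> A \<in> \<alpha>}"
  have S_sets: "S \<subseteq> sets M" using Kp unfolding S_def by auto
  have Seq: "{(indicator A :: 'a \<Rightarrow> real) | A \<alpha>. \<alpha> \<in> K \<and> A \<in> \<alpha>} = (\<lambda>A. indicator A) ` S"
    unfolding S_def by auto
  have RHS: "precompact_wrt (L2_dist M) {(indicator A :: 'a \<Rightarrow> real) | A \<alpha>. \<alpha> \<in> K \<and> A \<in> \<alpha>}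
      \<longleftrightarrow> precompact_wrt (symd M) S"
  proof -
    have "precompact_wrt (L2_dist M) ((\<lambda>A. indicator A :: 'a \<Rightarrow> real) ` S) \<longleftrightarrow>
          precompact_wrt (\<lambda>A B. L2_dist M (indicator A) (indicator B)) S"
      by (rule precompact_image)
    also have "\<dots> \<longleftrightarrow> precompact_wrt (\<lambda>A B. sqrt (symd M A B)) S"
      by (intro precompact_cong L2_ind) (use S_sets in auto)
    also have "\<dots> \<longleftrightarrow> precompact_wrt (symd M) S"
      by (rule precompact_sqrt) (rule symd_nonneg)
    finally show ?thesis unfolding Seq .
  qed
  have "precompact_wrt (rho_tilde M r) K \<longleftrightarrow> precompact_wrt (symd M) S"
  proof
    assume H: "precompact_wrt (rho_tilde M r) K"
    show "precompact_wrt (symd M) S"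
    proof (rule gen_cover[OF fm S_sets])
      fix e :: real assume e: "e > 0"
      from H[unfolded precompact_wrt_def, rule_format, OF e] obtain F where F: "finite F" "F \<subseteq> K" "\<forall>x\<in>K. \<exists>y\<in>F. rho_tilde M r x y < e"
        by blast
      define G where "G = insert {} (\<Union>\<beta>\<in>F. set (pl \<beta>))"
      show "\<exists>G. finite G \<and> G \<subseteq> sets M \<and> (\<forall>x\<in>S. \<exists>y\<in>G. symd M x y < e)"
      proof (intro exI[of _ G] conjI ballI)
        show "finite G" unfolding G_def using F(1) by auto
        show "G \<subseteq> sets M" unfolding G_def
        proof
          fix B assume "B \<in> insert {} (\<Union>\<beta>\<in>F. set (pl \<beta>))"
          then show "B \<in> sets M"
          proof
            assume "B \<in> (\<Union>\<beta>\<in>F. set (pl \<beta>))"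
            then obtain \<beta> where b: "\<beta> \<in> F" "B \<in> set (pl \<beta>)" by auto
            then obtain i where "i < r" "B = pl \<beta> ! i"
              using pl_len F(2) by (metis in_set_conv_nth subsetD)
            then show ?thesis using pl_sets F(2) b(1) by auto
          qed auto
        qed
        fix A assume "A \<in> S"
        then obtain \<alpha> where a: "\<alpha> \<in> K" "A \<in> \<alpha>" unfolding S_def by auto
        show "\<exists>y\<in>G. symd M A y < e"
        proof (cases "A = {}")
          case True
          then show ?thesis unfolding G_def symd_def using e by auto
        next
          case False
          then obtain i where i: "i < r" "pl \<alpha> ! i = A" using pl_in a by blast
          obtain \<beta> where b: "\<beta> \<in> F" "rho_tilde M r \<alpha> \<beta> < e" using F(3) a(1) by auto
          obtain \<sigma> where s: "\<sigma> permutes {..<r}" "cost \<alpha> \<beta> \<sigma> = rho_tilde M r \<alpha> \<beta>" using R2 by blast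
          have "symd M (pl \<alpha> ! i) (pl \<beta> ! \<sigma> i) \<le> cost \<alpha> \<beta> \<sigma>"
            unfolding cost_def using i(1)
            by (intro member_le_sum) (auto simp: symd_nonneg)
          moreover have "\<sigma> i < r" using s(1) i(1) by (metis lessThan_iff permutes_in_image)
          then have "pl \<beta> ! \<sigma> i \<in> set (pl \<beta>)" using b(1) pl_len F(2) by (metis nth_mem subsetD)
          then have "pl \<beta> ! \<sigma> i \<in> G" unfolding G_def using b(1) by blast
          ultimately show ?thesis using s(2) b(2) i(2) by force
        qed
      qed
    qed
  next
    assume H: "precompact_wrt (symd M) S"
    show "precompact_wrt (rho_tilde M r) K"
      unfolding precompact_wrt_def
    proof (intro allI impI)
      fix e :: real assume e: "e > 0"
      define \<delta> where "\<delta> = e / (2 * real r)"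
      have rpos: "real r > 0" using assms(2) by simp
      have dpos: "\<delta> > 0" unfolding \<delta>_def using e rpos by simp
      from H[unfolded precompact_wrt_def, rule_format, OF dpos] obtain G0 where G0: "finite G0" "G0 \<subseteq> S" "\<forall>x\<in>S. \<exists>y\<in>G0. symd M x y < \<delta>"
        by blast
      define G where "G = insert {} G0"
      have G: "finite G" "G \<subseteq> sets M" using G0 S_sets unfolding G_def by auto
      have cl: "\<exists>g\<in>G. symd M (pl \<alpha> ! i) g < \<delta>" if "\<alpha> \<in> K" "i < r" for \<alpha> i
      proof (cases "pl \<alpha> ! i = {}")
        case True then show ?thesis unfolding G_def symd_def using dpos by auto
      next
        case False
        then have "pl \<alpha> ! i \<in> S" using pl_memb[OF that] that(1) unfolding S_def by auto
        then show ?thesis using G0(3) unfolding G_def by auto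
      qed
      define tup where "tup \<alpha> = (\<lambda>i. if i < r then (SOME g. g \<in> G \<and> symd M (pl \<alpha> ! i) g < \<delta>) else {})" for \<alpha>
      have tup: "tup \<alpha> i \<in> G \<and> symd M (pl \<alpha> ! i) (tup \<alpha> i) < \<delta>" if "\<alpha> \<in> K" "i < r" for \<alpha> i
      proof -
        have "\<exists>g. g \<in> G \<and> symd M (pl \<alpha> ! i) g < \<delta>" using cl[OF that] by blast
        from someI_ex[OF this] show ?thesis unfolding tup_def using that(2) by simp
      qed
      have tupE: "tup \<alpha> \<in> {f. \<forall>x. (x \<in> {..<r} \<longrightarrow> f x \<in> G) \<and> (x \<notin> {..<r} \<longrightarrow> f x = {})}" if "\<alpha> \<in> K" for \<alpha>
      proof -
        have "\<forall>x. (x \<in> {..<r} \<longrightarrow> tup \<alpha> x \<in> G) \<and> (x \<notin> {..<r} \<longrightarrow> tup \<alpha> x = {})"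
        proof (intro allI conjI impI)
          fix x assume "x \<in> {..<r}" then show "tup \<alpha> x \<in> G" using tup[OF that] by simp
        next
          fix x assume "x \<notin> {..<r}" then show "tup \<alpha> x = {}" unfolding tup_def by simp
        qed
        then show ?thesis by simp
      qed
      have finT: "finite (tup ` K)"
        by (rule finite_subset[OF _ finite_set_of_finite_funs[OF finite_lessThan[of r] G(1)]])
           (use tupE in blast)
      define rep where "rep t = (SOME \<alpha>. \<alpha> \<in> K \<and> tup \<alpha> = t)" for t
      have rep: "rep (tup \<alpha>) \<in> K \<and> tup (rep (tup \<alpha>)) = tup \<alpha>" if "\<alpha> \<in> K" for \<alpha>
        using that unfolding rep_def by (metis (mono_tags, lifting) someI_ex)
      show "\<exists>F. finite F \<and> F \<subseteq> K \<and> (\<forall>x\<in>K. \<exists>y\<in>F. rho_tilde M r x y < e)"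
      proof (intro exI[of _ "rep ` tup ` K"] conjI ballI)
        show "finite (rep ` tup ` K)" using finT by simp
        show "rep ` tup ` K \<subseteq> K" using rep by auto
        fix \<alpha> assume a: "\<alpha> \<in> K"
        define \<beta> where "\<beta> = rep (tup \<alpha>)"
        have b: "\<beta> \<in> K" "tup \<beta> = tup \<alpha>" using rep[OF a] unfolding \<beta>_def by auto
        have "rho_tilde M r \<alpha> \<beta> \<le> (\<Sum>i<r. symd M (pl \<alpha> ! i) (pl \<beta> ! i))" by (rule R1)
        also have "\<dots> \<le> (\<Sum>i<r. symd M (pl \<alpha> ! i) (tup \<alpha> i) + symd M (tup \<alpha> i) (pl \<beta> ! i))"
        proof (rule sum_mono)
          fix i assume i: "i \<in> {..<r}"
          show "symd M (pl \<alpha> ! i) (pl \<beta> ! i) \<le> symd M (pl \<alpha> ! i) (tup \<alpha> i) + symd M (tup \<alpha> i) (pl \<beta> ! i)"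
          proof (rule symd_triangle[OF fm])
            show "pl \<alpha> ! i \<in> sets M" using pl_sets a i by simp
            show "pl \<beta> ! i \<in> sets M" using pl_sets b(1) i by simp
            show "tup \<alpha> i \<in> sets M" using tup[OF a] i G(2) by auto
          qed
        qed
        also have "\<dots> < (\<Sum>i<r. \<delta> + \<delta>)"
        proof (rule sum_strict_mono)
          have "0 \<in> {..<r}" using assms(2) by simp
          then show "{..<r} \<noteq> {}" by blast
          fix i assume i: "i \<in> {..<r}"
          have "symd M (tup \<alpha> i) (pl \<beta> ! i) < \<delta>"
            using tup[OF b(1)] i b(2) symd_sym by (metis lessThan_iff)
          then show "symd M (pl \<alpha> ! i) (tup \<alpha> i) + symd M (tup \<alpha> i) (pl \<beta> ! i) < \<delta> + \<delta>"
            using tup[OF a, of i] i by simp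
        qed auto
        also have "\<dots> = e" unfolding \<delta>_def using rpos by simp
        finally show "\<exists>y\<in>rep ` tup ` K. rho_tilde M r \<alpha> y < e" unfolding \<beta>_def using a by auto
      qed
    qed
  qed
  then show ?thesis using RHS by simp
qed

end
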